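(* Let $\Delta_{\{u_0,u_1,u_2\}}$ be a shortest-path triangle with Gromov product nodes $u_{0,1},u_{0,2},u_{1,2}$, and let $i\in\{0,1,2\}$. Let $v$ be a node on the subpath of $\mathcal P_\Delta(u_i,u_{i+2 \bmod 3})$ from $u_i$ to $u_{i,\,i+2\bmod 3}$, and $v'$ a node on the subpath of $\mathcal P_\Delta(u_i,u_{i+1\bmod 3})$ from $u_i$ to $u_{i,\,i+1\bmod 3}$, such that $d_{u_i,v}=d_{u_i,v'}$. Then $$d_{v,v'}\le 6\,\delta_{\Delta_{\{u_0,u_1,u_2\}}}+2.$$
   Context: $G=(V,E)$ is a finite connected undirected graph with $n\ge 4$ nodes and $d_{u,v}$ denotes the shortest-path distance (number of edges). For any four nodes $w_1,w_2,w_3,w_4$, form the three sums $d_{w_1,w_2}+d_{w_3,w_4}$, $d_{w_1,w_3}+d_{w_2,w_4}$, $d_{w_1,w_4}+d_{w_2,w_3}$, order them as $S\le M\le L$, and set $\delta_{w_1,w_2,w_3,w_4}=(L-M)/2$; $\delta_{\mathrm{worst}}(G)=\max_{w_1,w_2,w_3,w_4\in V}\delta_{w_1,w_2,w_3,w_4}$. A shortest-path triangle $\Delta_{\{u_0,u_1,u_2\}}$ consists of three distinct nodes $u_0,u_1,u_2$ together with chosen shortest paths $\mathcal P_\Delta(u_0,u_1)$, $\mathcal P_\Delta(u_0,u_2)$, $\mathcal P_\Delta(u_1,u_2)$ between the respective pairs. $\delta_{\Delta_{\{u_0,u_1,u_2\}}}$ is the maximum of $\delta_{w_1,w_2,w_3,w_4}$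 over all quadruples of nodes lying on these three paths (so $\delta_\Delta\le\delta_{\mathrm{worst}}(G)$). Gromov product nodes of the triangle are nodes $u_{0,1}\in\mathcal P_\Delta(u_0,u_1)$, $u_{0,2}\in\mathcal P_\Delta(u_0,u_2)$, $u_{1,2}\in\mathcal P_\Delta(u_1,u_2)$ with $d_{u_0,u_{0,1}}+d_{u_1,u_{0,1}}=d_{u_0,u_1}$, $d_{u_0,u_{0,2}}+d_{u_2,u_{0,2}}=d_{u_0,u_2}$, $d_{u_1,u_{1,2}}+d_{u_2,u_{1,2}}=d_{u_1,u_2}$, $d_{u_1,u_{0,1}}=d_{u_1,u_{1,2}}$, and $d_{u_0,u_{0,1}}=d_{u_0,u_{0,2}}=\lfloor (d_{u_0,u_1}+d_{u_0,u_2}-d_{u_1,u_2})/2\rfloor$. By convention $u_{1,0}=u_{0,1}$, $u_{2,0}=u_{0,2}$, $u_{2,1}=u_{1,2}$. *)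

theory Defs
  imports Complex_Main
begin

definition graph_walk :: "'a set \<Rightarrow> ('a \<Rightarrow> 'a \<Rightarrow> bool) \<Rightarrow> 'a list \<Rightarrow> bool" where
  "graph_walk V E xs \<longleftrightarrow> xs \<noteq> [] \<and> set xs \<subseteq> V \<and>
     (\<forall>i. Suc i < length xs \<longrightarrow> E (xs ! i) (xs ! Suc i))"

definition conn_graph :: "'a set \<Rightarrow> ('a \<Rightarrow> 'a \<Rightarrow> bool) \<Rightarrow> bool" where
  "conn_graph V E \<longleftrightarrow> finite V \<and> (\<forall>x y. E x y \<longrightarrow> x \<in> V \<and> y \<in> V) \<and>
     (\<forall>x y. E x y \<longrightarrow> E y x) \<and> (\<forall>x. \<not> E x x) \<and>
     (\<forall>x\<in>V. \<forall>y\<in>V. \<exists>xs. graph_walk V E xs \<and> hd xs = x \<and> last xs = y)"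

definition gdist :: "'a set \<Rightarrow> ('a \<Rightarrow> 'a \<Rightarrow> bool) \<Rightarrow> 'a \<Rightarrow> 'a \<Rightarrow> nat" where
  "gdist V E x y = (LEAST n. \<exists>xs. graph_walk V E xs \<and> hd xs = x \<and> last xs = y \<and> length xs = Suc n)"

definition shortest_path :: "'a set \<Rightarrow> ('a \<Rightarrow> 'a \<Rightarrow> bool) \<Rightarrow> 'a list \<Rightarrow> 'a \<Rightarrow> 'a \<Rightarrow> bool" where
  "shortest_path V E xs x y \<longleftrightarrow> graph_walk V E xs \<and> hd xs = x \<and> last xs = y \<and>
     length xs = Suc (gdist V E x y)"

definition delta_quad :: "'a set \<Rightarrow> ('a \<Rightarrow> 'a \<Rightarrow> bool) \<Rightarrow> 'a \<Rightarrow> 'a \<Rightarrow> 'a \<Rightarrow> 'a \<Rightarrow> real" where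
  "delta_quad V E w1 w2 w3 w4 =
    (let s = sort [gdist V E w1 w2 + gdist V E w3 w4,
                   gdist V E w1 w3 + gdist V E w2 w4,
                   gdist V E w1 w4 + gdist V E w2 w3]
     in (real (s ! 2) - real (s ! 1)) / 2)"

text \<open>delta of a node set (the union of the three triangle sides).\<close>
definition delta_set :: "'a set \<Rightarrow> ('a \<Rightarrow> 'a \<Rightarrow> bool) \<Rightarrow> 'a set \<Rightarrow> real" where
  "delta_set V E S = Max {delta_quad V E w1 w2 w3 w4 | w1 w2 w3 w4.
      w1 \<in> S \<and> w2 \<in> S \<and> w3 \<in> S \<and> w4 \<in> S}"

definition subpath_nodes :: "'a list \<Rightarrow> 'a \<Rightarrow> 'a \<Rightarrow> 'a set" where
  "subpath_nodes P a b = {P ! k | k ka kb. ka < length P \<and> kb < length P \<and>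
      P ! ka = a \<and> P ! kb = b \<and> min ka kb \<le> k \<and> k \<le> max ka kb}"

end

theory Submission
  imports Defs
begin

lemma walk_single: "x \<in> V \<Longrightarrow> graph_walk V E [x]"
  by (simp add: graph_walk_def)

lemma walk_Cons2: "graph_walk V E (x # y # xs) \<longleftrightarrow> x \<in> V \<and> E x y \<and> graph_walk V E (y # xs)"
proof
  assume a: "graph_walk V E (x # y # xs)"
  show "x \<in> V \<and> E x y \<and> graph_walk V E (y # xs)"
    unfolding graph_walk_def
  proof (intro conjI allI impI)
    show "x \<in> V" using a by (simp add: graph_walk_def)
    note h = a[unfolded graph_walk_def, THEN conjunct2, THEN conjunct2, rule_format]
    show "E x y" using h[of 0] by simp
    show "set (y # xs) \<subseteq> V" using a by (simp add: graph_walk_def)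
    fix i assume "Suc i < length (y # xs)"
    then show "E ((y # xs) ! i) ((y # xs) ! Suc i)"
      using h[of "Suc i"] by simp
  qed simp
next
  assume a: "x \<in> V \<and> E x y \<and> graph_walk V E (y # xs)"
  show "graph_walk V E (x # y # xs)"
    unfolding graph_walk_def
  proof (intro conjI allI impI)
    show "set (x # y # xs) \<subseteq> V" using a by (simp add: graph_walk_def)
    fix i assume i: "Suc i < length (x # y # xs)"
    show "E ((x # y # xs) ! i) ((x # y # xs) ! Suc i)"
    proof (cases i)
      case 0 then show ?thesis using a by simp
    next
      case (Suc i') then show ?thesis using a i unfolding graph_walk_def by simp
    qed
  qed simp
qed

lemma walk_append: "graph_walk V E xs \<Longrightarrow> graph_walk V E ys \<Longrightarrow> last xs = hd ys \<Longrightarrow>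
   graph_walk V E (xs @ tl ys)"
proof (induction xs)
  case Nil then show ?case by (simp add: graph_walk_def)
next
  case (Cons x xs)
  show ?case
  proof (cases xs)
    case Nil
    then have "x = hd ys" using Cons by simp
    then show ?thesis using Nil Cons.prems
      by (metis append_Cons append_Nil graph_walk_def list.collapse)
  next
    case (Cons y xs')
    have w: "x \<in> V" "E x y" "graph_walk V E (y # xs')" using Cons.prems Cons walk_Cons2 by metis+
    have "graph_walk V E (xs @ tl ys)" using Cons.IH Cons.prems w Cons by simp
    then show ?thesis using w Cons by (simp add: walk_Cons2)
  qed
qed

lemma walk_rev: assumes "graph_walk V E xs" "\<forall>x y. E x y \<longrightarrow> E y x"
  shows "graph_walk V E (rev xs)"
  unfolding graph_walk_def
proof (intro conjI allI impI)
  show "rev xs \<noteq> []" "set (rev xs) \<subseteq> V" using assms by (auto simp: graph_walk_def)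
  fix i assume i: "Suc i < length (rev xs)"
  have "E (xs ! (length xs - Suc (Suc i))) (xs ! Suc (length xs - Suc (Suc i)))"
    using assms(1) i unfolding graph_walk_def by simp
  moreover have "Suc (length xs - Suc (Suc i)) = length xs - Suc i" using i by simp
  ultimately show "E (rev xs ! i) (rev xs ! Suc i)"
    using i assms(2) by (simp add: rev_nth)
qed

lemma walk_take: "graph_walk V E xs \<Longrightarrow> graph_walk V E (take (Suc k) xs)"
  unfolding graph_walk_def by (auto dest: in_set_takeD)

lemma walk_drop: "graph_walk V E xs \<Longrightarrow> k < length xs \<Longrightarrow> graph_walk V E (drop k xs)"
  unfolding graph_walk_def by (auto dest: in_set_dropD)

lemma gdist_le: "graph_walk V E xs \<Longrightarrow> hd xs = x \<Longrightarrow> last xs = y \<Longrightarrow> gdist V E x y \<le> length xs - 1"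
  unfolding gdist_def
  by (rule Least_le) (auto simp: graph_walk_def)

lemma gdist_attained: assumes "conn_graph V E" "x \<in> V" "y \<in> V"
  shows "\<exists>xs. graph_walk V E xs \<and> hd xs = x \<and> last xs = y \<and> length xs = Suc (gdist V E x y)"
proof -
  obtain xs where xs: "graph_walk V E xs" "hd xs = x" "last xs = y"
    using assms unfolding conn_graph_def by blast
  then have "\<exists>n xs. graph_walk V E xs \<and> hd xs = x \<and> last xs = y \<and> length xs = Suc n"
    by (metis graph_walk_def length_greater_0_conv Suc_pred)
  then show ?thesis unfolding gdist_def by (rule LeastI_ex)
qed

lemma gdist_self: "x \<in> V \<Longrightarrow> gdist V E x x = 0"
  using gdist_le[of V E "[x]" x x] walk_single by fastforce

lemma gdist_sym_le: assumes "conn_graph V E" "x \<in> V" "y \<in> V"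
  shows "gdist V E y x \<le> gdist V E x y"
proof -
  obtain xs where xs: "graph_walk V E xs" "hd xs = x" "last xs = y" "length xs = Suc (gdist V E x y)"
    using gdist_attained[OF assms] by blast
  have "graph_walk V E (rev xs)" using walk_rev xs(1) assms(1) unfolding conn_graph_def by blast
  moreover have "hd (rev xs) = y" "last (rev xs) = x" using xs by (auto simp: graph_walk_def hd_rev last_rev)
  ultimately show ?thesis using gdist_le[of V E "rev xs" y x] xs(4) by simp
qed

lemma gdist_sym: "conn_graph V E \<Longrightarrow> x \<in> V \<Longrightarrow> y \<in> V \<Longrightarrow> gdist V E x y = gdist V E y x"
  using gdist_sym_le by (metis le_antisym)

lemma gdist_tri: assumes "conn_graph V E" "x \<in> V" "y \<in> V" "z \<in> V"
  shows "gdist V E x z \<le> gdist V E x y + gdist V E y z"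
proof -
  obtain xs where xs: "graph_walk V E xs" "hd xs = x" "last xs = y" "length xs = Suc (gdist V E x y)"
    using gdist_attained[OF assms(1,2,3)] by blast
  obtain ys where ys: "graph_walk V E ys" "hd ys = y" "last ys = z" "length ys = Suc (gdist V E y z)"
    using gdist_attained[OF assms(1,3,4)] by blast
  have w: "graph_walk V E (xs @ tl ys)" using walk_append xs ys by metis
  have "hd (xs @ tl ys) = x" using xs by (auto simp: graph_walk_def)
  moreover have "last (xs @ tl ys) = z"
  proof (cases "tl ys = []")
    case True
    then have "ys = [y]" using ys by (metis graph_walk_def list.collapse)
    then show ?thesis using xs ys True by simp
  next
    case False
    then show ?thesis using ys by (metis graph_walk_def last_appendR last_tl)
  qed
  ultimately show ?thesis using gdist_le[OF w] xs(4) ys(4) by simp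
qed

lemma path_dist: assumes G: "conn_graph V E" and P: "shortest_path V E Q x y" and k: "k < length Q"
  shows "gdist V E x (Q ! k) = k \<and> gdist V E (Q ! k) y = length Q - 1 - k"
proof -
  have w: "graph_walk V E Q" and h: "hd Q = x" and l: "last Q = y" and len: "length Q = Suc (gdist V E x y)"
    using P unfolding shortest_path_def by auto
  have QV: "set Q \<subseteq> V" using w by (simp add: graph_walk_def)
  have xV: "x \<in> V" using QV h w by (metis graph_walk_def hd_in_set subsetD)
  have yV: "y \<in> V" using QV l w by (metis graph_walk_def last_in_set subsetD)
  have vV: "Q ! k \<in> V" using QV k by (meson nth_mem subsetD)
  have t1: "gdist V E x (Q ! k) \<le> k"
  proof -
    have "hd (take (Suc k) Q) = x" using h k by (metis hd_take zero_less_Suc)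
    moreover have "last (take (Suc k) Q) = Q ! k" using k
      by (subst last_conv_nth) auto
    moreover have "length (take (Suc k) Q) = Suc k" using k by simp
    ultimately show ?thesis using gdist_le[OF walk_take[OF w, of k]] by simp
  qed
  have t2: "gdist V E (Q ! k) y \<le> length Q - 1 - k"
    using gdist_le[OF walk_drop[OF w k]] k l by (simp add: hd_drop_conv_nth)
  have "gdist V E x y \<le> gdist V E x (Q ! k) + gdist V E (Q ! k) y"
    using gdist_tri[OF G xV vV yV] .
  then show ?thesis using t1 t2 len k by linarith
qed

lemma sort3: fixes p q r :: nat
  shows "r + sort [p,q,r]!1 \<le> max p q + sort [p,q,r]!2 \<and> sort [p,q,r]!1 \<le> sort [p,q,r]!2"
  by (cases "p \<le> q"; cases "q \<le> r"; cases "p \<le> r"; simp add: max_def)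

lemma finite_dset: "finite S \<Longrightarrow> finite {delta_quad V E w1 w2 w3 w4 | w1 w2 w3 w4.
      w1 \<in> S \<and> w2 \<in> S \<and> w3 \<in> S \<and> w4 \<in> S}"
proof -
  assume f: "finite S"
  have "{delta_quad V E w1 w2 w3 w4 | w1 w2 w3 w4.
      w1 \<in> S \<and> w2 \<in> S \<and> w3 \<in> S \<and> w4 \<in> S} \<subseteq>
     (\<lambda>(a,b,c,d). delta_quad V E a b c d) ` (S \<times> S \<times> S \<times> S)" by force
  then show ?thesis using f by (meson finite_SigmaI finite_imageI finite_subset)
qed

lemma quad_le: "finite S \<Longrightarrow> w \<in> S \<Longrightarrow> x \<in> S \<Longrightarrow> y \<in> S \<Longrightarrow> z \<in> S \<Longrightarrow>
   delta_quad V E w x y z \<le> delta_set V E S"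
  unfolding delta_set_def by (rule Max_ge[OF finite_dset]) blast+

lemma quad_nonneg: "0 \<le> delta_quad V E w x y z"
  unfolding delta_quad_def Let_def using sort3 by simp

lemma fourpt: assumes "finite S" "w \<in> S" "x \<in> S" "y \<in> S" "z \<in> S"
  shows "real (gdist V E w z + gdist V E x y) \<le>
    max (real (gdist V E w x + gdist V E y z)) (real (gdist V E w y + gdist V E x z)) + 2 * delta_set V E S"
proof -
  define p where "p = gdist V E w x + gdist V E y z"
  define q where "q = gdist V E w y + gdist V E x z"
  define r where "r = gdist V E w z + gdist V E x y"
  have "delta_quad V E w x y z = (real (sort [p,q,r] ! 2) - real (sort [p,q,r] ! 1)) / 2"
    unfolding delta_quad_def p_def q_def r_def Let_def by simp
  moreover have "real (r + sort [p,q,r]!1) \<le> real (max p q + sort [p,q,r]!2)"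
    using sort3[where p=p and q=q and r=r] by linarith
  ultimately have "real r \<le> real (max p q) + 2 * delta_quad V E w x y z" by simp
  then show ?thesis using quad_le[OF assms, of V E] unfolding p_def q_def r_def
    by (simp add: of_nat_max)
qed

lemma core:
  assumes G: "conn_graph V E"
    and fp: "\<And>w x y z. w\<in>S \<Longrightarrow> x\<in>S \<Longrightarrow> y\<in>S \<Longrightarrow> z\<in>S \<Longrightarrow>
       real (gdist V E w z + gdist V E x y) \<le>
       max (real (gdist V E w x + gdist V E y z)) (real (gdist V E w y + gdist V E x z)) + 2 * D"
    and D0: "D \<ge> 0"
    and PL: "shortest_path V E PL ui ul" and PJ: "shortest_path V E PJ ui uj"
    and SL: "set PL \<subseteq> S" and SJ: "set PJ \<subseteq> S"
    and kv: "k < length PL" and kw: "k < length PJ"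
    and gr: "real (2 * k) + real (gdist V E uj ul) \<le> real (gdist V E ui uj) + real (gdist V E ui ul) + 1"
  shows "real (gdist V E (PL ! k) (PJ ! k)) \<le> 4 * D + 1"
proof -
  have wL: "graph_walk V E PL" "hd PL = ui" "last PL = ul" "length PL = Suc (gdist V E ui ul)"
    using PL unfolding shortest_path_def by auto
  have wJ: "graph_walk V E PJ" "hd PJ = ui" "last PJ = uj" "length PJ = Suc (gdist V E ui uj)"
    using PJ unfolding shortest_path_def by auto
  have SV: "set PL \<subseteq> V" "set PJ \<subseteq> V" using wL wJ by (auto simp: graph_walk_def)
  have uiS: "ui \<in> S" using wL SL by (metis graph_walk_def hd_in_set subsetD)
  have ulS: "ul \<in> S" using wL SL by (metis graph_walk_def last_in_set subsetD)
  have ujS: "uj \<in> S" using wJ SJ by (metis graph_walk_def last_in_set subsetD)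
  have ulV: "ul \<in> V" using wL SV by (metis graph_walk_def last_in_set subsetD)
  have ujV: "uj \<in> V" using wJ SV by (metis graph_walk_def last_in_set subsetD)
  define v where "v = PL ! k"
  define v' where "v' = PJ ! k"
  have vS: "v \<in> S" using kv SL v_def by (meson nth_mem subsetD)
  have v'S: "v' \<in> S" using kw SJ v'_def by (meson nth_mem subsetD)
  have v'V: "v' \<in> V" using kw SV v'_def by (meson nth_mem subsetD)
  have d1: "gdist V E ui v = k" "gdist V E v ul = gdist V E ui ul - k"
    using path_dist[OF G PL kv] wL v_def by auto
  have d2: "gdist V E ui v' = k" "gdist V E v' uj = gdist V E ui uj - k"
    using path_dist[OF G PJ kw] wJ v'_def by auto
  have s1: "gdist V E ul uj = gdist V E uj ul" using gdist_sym[OF G ulV ujV] .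
  have s2: "gdist V E v' ul = gdist V E ul v'" using gdist_sym[OF G v'V ulV] .
  have kL: "k \<le> gdist V E ui ul" "k \<le> gdist V E ui uj" using kv kw wL wJ by auto
  have mx: "\<And>x a b c :: real. x \<le> max a b + c \<Longrightarrow> x \<le> a + c \<or> x \<le> b + c"
    by (simp add: max_def split: if_split_asm)
  have st1: "real (gdist V E ui uj + gdist V E ul v') \<le>
     max (real (gdist V E ui ul + gdist V E v' uj)) (real (gdist V E ui v' + gdist V E ul uj)) + 2 * D"
    using fp[OF uiS ulS v'S ujS] .
  have st2: "real (gdist V E ui ul + gdist V E v v') \<le>
     max (real (gdist V E ui v + gdist V E v' ul)) (real (gdist V E ui v' + gdist V E v ul)) + 2 * D"
    using fp[OF uiS vS v'S ulS] .
  define A where "A = real (gdist V E ui uj)"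
  define B where "B = real (gdist V E ui ul)"
  define C where "C = real (gdist V E uj ul)"
  define Y where "Y = real (gdist V E ul v')"
  define X where "X = real (gdist V E v v')"
  have e1: "A + Y \<le> B + (A - real k) + 2 * D \<or> A + Y \<le> real k + C + 2 * D"
    using mx[OF st1] d2 s1 kL unfolding A_def B_def C_def Y_def by (simp add: of_nat_diff)
  have e2: "B + X \<le> real k + Y + 2 * D \<or> B + X \<le> real k + (B - real k) + 2 * D"
    using mx[OF st2] d1 d2 s2 kL unfolding B_def X_def Y_def by (simp add: of_nat_diff)
  have gr': "2 * real k + C \<le> A + B + 1" using gr unfolding A_def B_def C_def by simp
  have "X \<le> 4 * D + 1" using e1 e2 gr' D0 by linarith
  then show ?thesis unfolding X_def v_def v'_def .
qed

lemma sub_idx: assumes G: "conn_graph V E" and P: "shortest_path V E Q x y"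
  and v: "v \<in> subpath_nodes Q x g"
  shows "\<exists>k. k < length Q \<and> v = Q ! k \<and> k \<le> gdist V E x g \<and> gdist V E x v = k"
proof -
  obtain k ka kb where kk: "v = Q ! k" "ka < length Q" "kb < length Q" "Q ! ka = x" "Q ! kb = g"
    "min ka kb \<le> k" "k \<le> max ka kb"
    using v unfolding subpath_nodes_def by blast
  have xV: "x \<in> V" using P unfolding shortest_path_def
    by (metis graph_walk_def hd_in_set subsetD)
  have "ka = gdist V E x (Q ! ka)" using path_dist[OF G P kk(2)] by simp
  then have ka: "ka = 0" using kk(4) gdist_self[OF xV] by simp
  have kb: "gdist V E x g = kb" using path_dist[OF G P kk(3)] kk(5) by simp
  have "k < length Q" using kk ka by auto
  then show ?thesis using kk ka kb path_dist[OF G P] by auto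
qed

theorem theorem2:
  fixes V :: "'a set" and E :: "'a \<Rightarrow> 'a \<Rightarrow> bool"
    and u :: "nat \<Rightarrow> 'a" and P :: "nat \<Rightarrow> nat \<Rightarrow> 'a list" and g :: "nat \<Rightarrow> nat \<Rightarrow> 'a"
    and i :: nat and v v' :: 'a
  assumes G: "conn_graph V E" and n4: "card V \<ge> 4"
    and uV: "\<forall>j<3. u j \<in> V"
    and udist: "u 0 \<noteq> u 1" "u 0 \<noteq> u 2" "u 1 \<noteq> u 2"
    and Psp: "\<forall>j<3. \<forall>k<3. j \<noteq> k \<longrightarrow> shortest_path V E (P j k) (u j) (u k)"
    and Prev: "\<forall>j<3. \<forall>k<3. P k j = rev (P j k)"
    and gsym: "\<forall>j<3. \<forall>k<3. g k j = g j k"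
    and gon: "g 0 1 \<in> set (P 0 1)" "g 0 2 \<in> set (P 0 2)" "g 1 2 \<in> set (P 1 2)"
    and g01: "gdist V E (u 0) (g 0 1) + gdist V E (u 1) (g 0 1) = gdist V E (u 0) (u 1)"
    and g02: "gdist V E (u 0) (g 0 2) + gdist V E (u 2) (g 0 2) = gdist V E (u 0) (u 2)"
    and g12: "gdist V E (u 1) (g 1 2) + gdist V E (u 2) (g 1 2) = gdist V E (u 1) (u 2)"
    and g1: "gdist V E (u 1) (g 0 1) = gdist V E (u 1) (g 1 2)"
    and g0a: "gdist V E (u 0) (g 0 1) = gdist V E (u 0) (g 0 2)"
    and g0b: "int (gdist V E (u 0) (g 0 1)) =
       \<lfloor>(real (gdist V E (u 0) (u 1)) + real (gdist V E (u 0) (u 2))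
          - real (gdist V E (u 1) (u 2))) / 2\<rfloor>"
    and i3: "i < 3"
    and v: "v \<in> subpath_nodes (P i ((i + 2) mod 3)) (u i) (g i ((i + 2) mod 3))"
    and v': "v' \<in> subpath_nodes (P i ((i + 1) mod 3)) (u i) (g i ((i + 1) mod 3))"
    and eq: "gdist V E (u i) v = gdist V E (u i) v'"
  shows "real (gdist V E v v') \<le>
           6 * delta_set V E (set (P 0 1) \<union> set (P 0 2) \<union> set (P 1 2)) + 2"
proof -
  define S where "S = set (P 0 1) \<union> set (P 0 2) \<union> set (P 1 2)"
  define D where "D = delta_set V E S"
  define a where "a = gdist V E (u 0) (u 1)"
  define b where "b = gdist V E (u 0) (u 2)"
  define c where "c = gdist V E (u 1) (u 2)"
  define k0 where "k0 = gdist V E (u 0) (g 0 1)"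
  have fS: "finite S" unfolding S_def by simp
  have P01: "shortest_path V E (P 0 1) (u 0) (u 1)" using Psp[rule_format, of 0 1] by simp
  have P02: "shortest_path V E (P 0 2) (u 0) (u 2)" using Psp[rule_format, of 0 2] by simp
  have P12: "shortest_path V E (P 1 2) (u 1) (u 2)" using Psp[rule_format, of 1 2] by simp
  have P10: "shortest_path V E (P 1 0) (u 1) (u 0)" using Psp[rule_format, of 1 0] by simp
  have P20: "shortest_path V E (P 2 0) (u 2) (u 0)" using Psp[rule_format, of 2 0] by simp
  have P21: "shortest_path V E (P 2 1) (u 2) (u 1)" using Psp[rule_format, of 2 1] by simp
  have r10: "P 1 0 = rev (P 0 1)" using Prev[rule_format, of 0 1] by simp
  have r20: "P 2 0 = rev (P 0 2)" using Prev[rule_format, of 0 2] by simp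
  have r21: "P 2 1 = rev (P 1 2)" using Prev[rule_format, of 1 2] by simp
  have S10: "set (P 1 0) \<subseteq> S" using r10 unfolding S_def by auto
  have S20: "set (P 2 0) \<subseteq> S" using r20 unfolding S_def by auto
  have S21: "set (P 2 1) \<subseteq> S" using r21 unfolding S_def by auto
  have u0S: "u 0 \<in> S" using P01 unfolding S_def shortest_path_def
    by (metis UnI1 graph_walk_def hd_in_set)
  have D0: "D \<ge> 0" using quad_nonneg[of V E "u 0" "u 0" "u 0" "u 0"] quad_le[OF fS u0S u0S u0S u0S, of V E]
    unfolding D_def by linarith
  have fin: "real (gdist V E (PL ! k) (PJ ! k)) \<le> 6 * D + 2"
    if "shortest_path V E PL ui ul" "shortest_path V E PJ ui uj" "set PL \<subseteq> S" "set PJ \<subseteq> S"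
      "k < length PL" "k < length PJ"
      "real (2 * k) + real (gdist V E uj ul) \<le> real (gdist V E ui uj) + real (gdist V E ui ul) + 1"
    for PL PJ ui ul uj k
  proof -
    have "real (gdist V E (PL ! k) (PJ ! k)) \<le> 4 * D + 1"
      by (rule core[OF G _ D0 that]) (unfold D_def, rule fourpt[OF fS])
    then show ?thesis using D0 by linarith
  qed
  have u0V: "u 0 \<in> V" and u1V: "u 1 \<in> V" and u2V: "u 2 \<in> V" using uV by auto
  have fl: "real k0 \<le> (real a + real b - real c) / 2" "(real a + real b - real c) / 2 < real k0 + 1"
    using g0b floor_correct[of "(real a + real b - real c) / 2"] unfolding a_def b_def c_def k0_def
    by (metis of_int_of_nat_eq of_int_add of_int_1)+
  have ga: "gdist V E (u 1) (g 0 1) = a - k0" using g01 unfolding a_def k0_def by linarith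
  have S01: "set (P 0 1) \<subseteq> S" and S02: "set (P 0 2) \<subseteq> S" and S12: "set (P 1 2) \<subseteq> S" unfolding S_def by auto
  have "i = 0 \<or> i = 1 \<or> i = 2" using i3 by auto
  then show ?thesis
  proof (elim disjE)
    assume i0: "i = 0"
    have e1: "(0 + 2) mod 3 = (2::nat)" and e2: "(0 + 1) mod 3 = (1::nat)" by simp_all
    have vv: "v \<in> subpath_nodes (P 0 2) (u 0) (g 0 2)" using v unfolding i0 e1 .
    have vv': "v' \<in> subpath_nodes (P 0 1) (u 0) (g 0 1)" using v' unfolding i0 e2 .
    obtain k where k: "k < length (P 0 2)" "v = P 0 2 ! k" "k \<le> gdist V E (u 0) (g 0 2)" "gdist V E (u 0) v = k"
      using sub_idx[OF G P02 vv] by blast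
    obtain k' where k': "k' < length (P 0 1)" "v' = P 0 1 ! k'" "gdist V E (u 0) v' = k'"
      using sub_idx[OF G P01 vv'] by blast
    have kk: "k' = k" using k(4) k'(3) eq i0 by simp
    have kl: "k < length (P 0 1)" using k'(1) kk by simp
    have "real (2 * k) + real c \<le> real a + real b + 1" using k(3) g0a fl unfolding k0_def by simp
    then have gg: "real (2 * k) + real (gdist V E (u 1) (u 2)) \<le> real (gdist V E (u 0) (u 1)) + real (gdist V E (u 0) (u 2)) + 1"
      unfolding a_def b_def c_def .
    have fi: "real (gdist V E (P 0 2 ! k) (P 0 1 ! k)) \<le> 6 * D + 2"
      by (rule fin[OF P02 P01 S02 S01 k(1) kl]) (use gg in simp)
    show ?thesis using fi k(2) k'(2) kk unfolding D_def S_def by simp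
  next
    assume i1: "i = 1"
    have e1: "(1 + 2) mod 3 = (0::nat)" and e2: "(1 + 1) mod 3 = (2::nat)" by simp_all
    have vv: "v \<in> subpath_nodes (P 1 0) (u 1) (g 1 0)" using v unfolding i1 e1 .
    have vv': "v' \<in> subpath_nodes (P 1 2) (u 1) (g 1 2)" using v' unfolding i1 e2 .
    obtain k where k: "k < length (P 1 0)" "v = P 1 0 ! k" "k \<le> gdist V E (u 1) (g 1 0)" "gdist V E (u 1) v = k"
      using sub_idx[OF G P10 vv] by blast
    obtain k' where k': "k' < length (P 1 2)" "v' = P 1 2 ! k'" "gdist V E (u 1) v' = k'"
      using sub_idx[OF G P12 vv'] by blast
    have kk: "k' = k" using k(4) k'(3) eq i1 by simp
    have kl: "k < length (P 1 2)" using k'(1) kk by simp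
    have g10: "g 1 0 = g 0 1" using gsym[rule_format, of 0 1] by simp
    have sy: "gdist V E (u 2) (u 0) = b" "gdist V E (u 1) (u 0) = a"
      unfolding a_def b_def using gdist_sym[OF G u2V u0V] gdist_sym[OF G u1V u0V] by simp_all
    have k1: "k \<le> a - k0" using k(3) unfolding g10 ga .
    have k0a: "k0 \<le> a" using g01 unfolding a_def k0_def by linarith
    have "real (a + b) < real (c + 2 * k0 + 2)" using fl(2) by simp
    then have "a + b < c + 2 * k0 + 2" by (simp only: of_nat_less_iff)
    then have "2 * k + b \<le> c + a + 1" using k1 k0a by linarith
    then have "real (2 * k + b) \<le> real (c + a + 1)" by (simp only: of_nat_le_iff)
    then have "real (2 * k) + real b \<le> real c + real a + 1" by simp
    then have gg: "real (2 * k) + real (gdist V E (u 2) (u 0)) \<le> real (gdist V E (u 1) (u 2)) + real (gdist V E (u 1) (u 0)) + 1"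
      unfolding sy c_def .
    have fi: "real (gdist V E (P 1 0 ! k) (P 1 2 ! k)) \<le> 6 * D + 2"
      by (rule fin[OF P10 P12 S10 S12 k(1) kl]) (use gg in simp)
    show ?thesis using fi k(2) k'(2) kk unfolding D_def S_def by simp
  next
    assume i2: "i = 2"
    have e1: "(2 + 2) mod 3 = (1::nat)" and e2: "(2 + 1) mod 3 = (0::nat)" by simp_all
    have vv: "v \<in> subpath_nodes (P 2 1) (u 2) (g 2 1)" using v unfolding i2 e1 .
    have vv': "v' \<in> subpath_nodes (P 2 0) (u 2) (g 2 0)" using v' unfolding i2 e2 .
    obtain k where k: "k < length (P 2 1)" "v = P 2 1 ! k" "k \<le> gdist V E (u 2) (g 2 1)" "gdist V E (u 2) v = k"
      using sub_idx[OF G P21 vv] by blast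
    obtain k' where k': "k' < length (P 2 0)" "v' = P 2 0 ! k'" "gdist V E (u 2) v' = k'"
      using sub_idx[OF G P20 vv'] by blast
    have kk: "k' = k" using k(4) k'(3) eq i2 by simp
    have kl: "k < length (P 2 0)" using k'(1) kk by simp
    have g21: "g 2 1 = g 1 2" using gsym[rule_format, of 1 2] by simp
    have sy: "gdist V E (u 2) (u 0) = b" "gdist V E (u 2) (u 1) = c"
      using gdist_sym[OF G] u0V u1V u2V unfolding b_def c_def by metis+
    have g2: "gdist V E (u 2) (g 1 2) = c - (a - k0)" using g12 g1 ga unfolding c_def by linarith
    have "k \<le> c - (a - k0)" using k(3) g21 g2 by simp
    have ac: "a - k0 \<le> c" using g12 g1 ga unfolding c_def by linarith
    have k0a: "k0 \<le> a" using g01 unfolding a_def k0_def by linarith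
    have "real (c + 2 * k0) \<le> real (a + b)" using fl(1) by simp
    then have "c + 2 * k0 \<le> a + b" by (simp only: of_nat_le_iff)
    then have "2 * k + a \<le> b + c + 1" using \<open>k \<le> c - (a - k0)\<close> ac k0a by linarith
    then have "real (2 * k + a) \<le> real (b + c + 1)" by (simp only: of_nat_le_iff)
    then have "real (2 * k) + real a \<le> real b + real c + 1" by simp
    then have gg: "real (2 * k) + real (gdist V E (u 0) (u 1)) \<le> real (gdist V E (u 2) (u 0)) + real (gdist V E (u 2) (u 1)) + 1"
      unfolding sy a_def .
    have fi: "real (gdist V E (P 2 1 ! k) (P 2 0 ! k)) \<le> 6 * D + 2"
      by (rule fin[OF P21 P20 S21 S20 k(1) kl]) (use gg in simp)
    show ?thesis using fi k(2) k'(2) kk unfolding D_def S_def by simp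
  qed
qed

end
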